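(* For every nonzero $a\in\mathcal F^0(\mathbb Z,\bar K)$ there exists an integer $m_a>0$, depending only on $a$, such that every function $f:\mathbb Z\to\bar K$ with $f*a=0$ is $m_a$-periodic. Consequently $\ker(\Delta_a)$ is contained in the space of $m_a\mathbb Z$-periodic functions on $\mathbb Z$ and is finite dimensional.
   Context: $K=\mathrm{GF}(p^r)$, $\bar K$ an algebraic closure. $\mathcal F^0(\mathbb Z,\bar K)$ is the space of finitely supported functions $\mathbb Z\to\bar K$; $(f*a)(n)=\sum_{k}f(k)a(n-k)$; $\Delta_af=f*a$ on all functions $\mathbb Z\to\bar K$. *)

theory Defs
  imports "HOL-Algebra.Algebraic_Closure_Type" "HOL-Library.Function_Algebras"
begin

definition fin_supp :: "(int \<Rightarrow> 'a::zero) \<Rightarrow> bool" where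
  "fin_supp a \<longleftrightarrow> finite {k. a k \<noteq> 0}"

text \<open>Convolution (f * a)(n) = sum_k f(k) a(n-k); for finitely supported a the
  sum ranges over the finitely many k with a(n-k) nonzero.\<close>
definition conv :: "(int \<Rightarrow> 'a::comm_ring_1) \<Rightarrow> (int \<Rightarrow> 'a) \<Rightarrow> int \<Rightarrow> 'a" where
  "conv f a n = (\<Sum>k\<in>{k. a (n - k) \<noteq> 0}. f k * a (n - k))"

definition Delta :: "(int \<Rightarrow> 'a::comm_ring_1) \<Rightarrow> (int \<Rightarrow> 'a) \<Rightarrow> (int \<Rightarrow> 'a)" where
  "Delta a f = conv f a"

definition periodic_with :: "int \<Rightarrow> (int \<Rightarrow> 'a) \<Rightarrow> bool" where
  "periodic_with m f \<longleftrightarrow> (\<forall>n. f (n + m) = f n)"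

definition fscale :: "'a::comm_ring_1 \<Rightarrow> (int \<Rightarrow> 'a) \<Rightarrow> (int \<Rightarrow> 'a)" where
  "fscale c f = (\<lambda>n. c * f n)"

end

theory Submission imports Defs "HOL-Computational_Algebra.Polynomial"
begin

lemma finite_deg_le: "finite {Q :: 'a::{zero,finite} poly. degree Q \<le> e}"
proof -
  have "{Q :: 'a poly. degree Q \<le> e} \<subseteq> Poly ` {cs. set cs \<subseteq> UNIV \<and> length cs = Suc e}"
  proof
    fix Q :: "'a poly" assume "Q \<in> {Q. degree Q \<le> e}"
    then have d: "degree Q \<le> e" by simp
    let ?cs = "coeffs Q @ replicate (Suc e - length (coeffs Q)) 0"
    have "length (coeffs Q) \<le> Suc e" using d by (cases "Q=0") (auto simp: length_coeffs)
    then have "length ?cs = Suc e" by simp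
    moreover have "Poly ?cs = Q" by simp
    ultimately show "Q \<in> Poly ` {cs. set cs \<subseteq> UNIV \<and> length cs = Suc e}"
      by (intro image_eqI[where x="?cs"]) auto
  qed
  moreover have "finite {cs :: 'a list. set cs \<subseteq> UNIV \<and> length cs = Suc e}"
    by (rule finite_lists_length_eq) simp
  ultimately show ?thesis using finite_subset by blast
qed

lemma map_ac_add: "map_poly to_ac (p + q) = map_poly to_ac p + map_poly to_ac q"
  by (rule poly_eqI) (simp add: coeff_map_poly)

lemma map_ac_smult: "map_poly to_ac (smult a q) = smult (to_ac a) (map_poly to_ac q)"
  by (rule poly_eqI) (simp add: coeff_map_poly)

lemma map_ac_mult: "map_poly to_ac (p * q) = map_poly to_ac p * map_poly to_ac q"
proof (induction p rule: pCons_induct)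
  case 0
  then show ?case by simp
next
  case (pCons a p)
  then show ?case by (simp add: map_ac_add map_ac_smult map_poly_pCons)
qed

lemma root_unity:
  fixes x :: "'k::{field,finite} alg_closure"
  assumes "x \<noteq> 0" shows "\<exists>k>0. x ^ k = 1"
proof -
  obtain P :: "'k poly" where P: "P \<noteq> 0" "poly (map_poly to_ac P) x = 0"
    by (rule alg_closure_algebraic)
  define R where "R n = monom 1 n mod P" for n
  have ev: "x ^ n = poly (map_poly to_ac (R n)) x" for n
  proof -
    have "monom 1 n = (monom 1 n div P) * P + R n" unfolding R_def by simp
    then have "poly (map_poly to_ac (monom 1 n)) x = poly (map_poly to_ac ((monom 1 n div P) * P + R n)) x"
      by simp
    then show ?thesis using P(2) by (simp add: map_ac_add map_ac_mult map_poly_monom poly_monom)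
  qed
  have "range R \<subseteq> {Q. degree Q \<le> degree P}"
  proof safe
    fix n
    show "degree (R n) \<le> degree P"
      using degree_mod_less[OF P(1), of "monom 1 n"] unfolding R_def by auto
  qed
  then have "finite (range R)" using finite_deg_le finite_subset by blast
  then have "\<not> inj R" using finite_imageD infinite_UNIV_nat by blast
  then obtain n1 n2 where n: "n1 \<noteq> n2" "R n1 = R n2" unfolding inj_def by blast
  have "\<exists>a b. a < b \<and> x ^ a = x ^ b"
  proof (cases "n1 < n2")
    case True
    then show ?thesis using n ev by metis
  next
    case False
    then have "n2 < n1" using n(1) by simp
    then show ?thesis using n ev by metis
  qed
  then obtain a b where ab: "a < b" "x ^ a = x ^ b" by blast
  have "x ^ b = x ^ a * x ^ (b - a)" using ab(1) by (simp add: power_add[symmetric])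
  then have "x ^ (b - a) = 1" using ab(2) assms by simp
  then show ?thesis using ab(1) by (intro exI[of _ "b - a"]) simp
qed

definition opP :: "'a::comm_ring_1 poly \<Rightarrow> (int \<Rightarrow> 'a) \<Rightarrow> int \<Rightarrow> 'a" where
  "opP P f n = (\<Sum>i\<le>degree P. coeff P i * f (n + int i))"

lemma opP_ext: "degree P \<le> N \<Longrightarrow> opP P f n = (\<Sum>i\<le>N. coeff P i * f (n + int i))"
  unfolding opP_def by (rule sum.mono_neutral_left) (auto simp: coeff_eq_0)

lemma opP_lin: "opP ([:-c,1:] * Q) f = opP Q (\<lambda>n. f (n+1) - c * f n)"
proof (rule ext)
  fix n
  let ?N = "Suc (degree Q)"
  have d: "degree ([:-c,1:] * Q) \<le> ?N"
    using degree_mult_le[of "[:-c,1:]" Q] by simp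
  have "opP ([:-c,1:] * Q) f n = (\<Sum>i\<le>?N. coeff ([:-c,1:] * Q) i * f (n + int i))"
    by (rule opP_ext[OF d])
  also have "\<dots> = (\<Sum>i\<le>?N. (- c) * coeff Q i * f (n+int i)) + (\<Sum>i\<le>?N. coeff (pCons 0 Q) i * f (n + int i))"
    by (simp add: sum.distrib[symmetric] algebra_simps)
  also have "(\<Sum>i\<le>?N. (- c) * coeff Q i * f (n+int i)) = (\<Sum>i\<le>degree Q. (- c) * coeff Q i * f (n+int i))"
    by (simp add: coeff_eq_0)
  also have "(\<Sum>i\<le>?N. coeff (pCons 0 Q) i * f (n + int i)) = (\<Sum>i\<le>degree Q. coeff Q i * f (n + 1 + int i))"
    by (subst sum.atMost_Suc_shift) (simp add: add_ac)
  also have "(\<Sum>i\<le>degree Q. (- c) * coeff Q i * f (n+int i)) + (\<Sum>i\<le>degree Q. coeff Q i * f (n + 1 + int i))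
     = opP Q (\<lambda>n. f (n+1) - c * f n) n"
    unfolding opP_def by (simp add: sum.distrib[symmetric] algebra_simps)
  finally show "opP ([:-c,1:] * Q) f n = opP Q (\<lambda>n. f (n+1) - c * f n) n" .
qed

lemma step:
  fixes f g :: "int \<Rightarrow> 'a::comm_ring_1"
  assumes g: "\<And>n. g n = f (n+1) - lam * f n" and per: "periodic_with m g" and m: "m \<ge> 0"
    and lk: "lam ^ k = 1" and ch: "of_nat c = (0::'a)"
  shows "periodic_with (int c * (int k * m)) f"
proof -
  define h where "h n = f (n+m) - f n" for n
  have h1: "h (n+1) = lam * h n" for n
  proof -
    have "g (n+m) = g n" using per unfolding periodic_with_def by simp
    then have "f (n+m+1) - lam * f (n+m) = f (n+1) - lam * f n" using g by simp
    then show ?thesis unfolding h_def by (simp add: algebra_simps)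
  qed
  have hj: "h (n + int j) = lam^j * h n" for j n
  proof (induction j)
    case 0 then show ?case by simp
  next
    case (Suc j)
    have "h (n + int (Suc j)) = h ((n + int j) + 1)" by (simp add: add_ac)
    also have "\<dots> = lam * h (n + int j)" by (rule h1)
    finally show ?case using Suc by simp
  qed
  have hk: "h (n + int k) = h n" for n using hj[of n k] lk by simp
  have hkj: "h (n + int k * int j) = h n" for n j
  proof (induction j)
    case 0 then show ?case by simp
  next
    case (Suc j)
    have "h (n + int k * int (Suc j)) = h ((n + int k * int j) + int k)" by (simp add: algebra_simps)
    also have "\<dots> = h n" using hk Suc by simp
    finally show ?case .
  qed
  have hkm: "h (n + int k * m) = h n" for n using hkj[of n "nat m"] m by simp
  define H where "H n = (\<Sum>j<k. h (n + int j * m))" for n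
  have L1: "f (n + int j * m) = f n + (\<Sum>i<j. h (n + int i * m))" for j n
  proof (induction j)
    case 0 then show ?case by simp
  next
    case (Suc j)
    have "f (n + int (Suc j) * m) = f ((n + int j * m) + m)" by (simp add: algebra_simps)
    also have "\<dots> = f (n + int j * m) + h (n + int j * m)" unfolding h_def by simp
    finally show ?case using Suc by simp
  qed
  have fk: "f (n + int k * m) = f n + H n" for n unfolding H_def using L1[of n k] by simp
  have Hp: "H (n + int k * m) = H n" for n
    unfolding H_def
  proof (rule sum.cong)
    fix j assume "j \<in> {..<k}"
    have "h (n + int k * m + int j * m) = h ((n + int j * m) + int k * m)" by (simp add: algebra_simps)
    also have "\<dots> = h (n + int j * m)" by (rule hkm)
    finally show "h (n + int k * m + int j * m) = h (n + int j * m)" .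
  qed simp
  have Hpi: "H (n + int i * (int k * m)) = H n" for n i
  proof (induction i)
    case 0 then show ?case by simp
  next
    case (Suc i)
    have "H (n + int (Suc i) * (int k * m)) = H ((n + int i * (int k * m)) + int k * m)" by (simp add: algebra_simps)
    also have "\<dots> = H n" using Hp Suc by simp
    finally show ?case .
  qed
  have L3: "f (n + int i * (int k * m)) = f n + of_nat i * H n" for n i
  proof (induction i)
    case 0 then show ?case by simp
  next
    case (Suc i)
    have "f (n + int (Suc i) * (int k * m)) = f ((n + int i * (int k * m)) + int k * m)" by (simp add: algebra_simps)
    also have "\<dots> = f (n + int i * (int k * m)) + H (n + int i * (int k * m))" by (rule fk)
    finally show ?case using Suc Hpi by (simp add: algebra_simps)
  qed
  show ?thesis unfolding periodic_with_def
  proof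
    fix n show "f (n + int c * (int k * m)) = f n" using L3[of n c] ch by simp
  qed
qed

lemma char_ac: "\<exists>c::nat. c > 0 \<and> of_nat c = (0 :: 'k::{field,finite} alg_closure)"
proof -
  have "CHAR('k) > 0" by (rule finite_imp_CHAR_pos) simp
  moreover have "of_nat CHAR('k) = (0 :: 'k alg_closure)"
    using of_nat_CHAR[where ?'a="'k alg_closure"] by (simp only: CHAR_alg_closure)
  ultimately show ?thesis by blast
qed

lemma main_op:
  fixes A :: "'k::{field,finite} alg_closure poly"
  shows "A \<noteq> 0 \<Longrightarrow> poly A 0 \<noteq> 0 \<Longrightarrow> \<exists>m>0. \<forall>f. opP A f = (\<lambda>_. 0) \<longrightarrow> periodic_with m f"
proof (induction "degree A" arbitrary: A rule: less_induct)
  case less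
  show ?case
  proof (cases "degree A = 0")
    case True
    then obtain c where A: "A = [:c:]" using degree_eq_zeroE by blast
    with less.prems have c: "c \<noteq> 0" by simp
    show ?thesis
    proof (intro exI[of _ 1] conjI allI impI)
      fix f :: "int \<Rightarrow> 'k alg_closure" assume "opP A f = (\<lambda>_. 0)"
      then have "c * f n = 0" for n using A by (auto simp: opP_def fun_eq_iff)
      then have "f n = 0" for n using c by simp
      then show "periodic_with 1 f" unfolding periodic_with_def by simp
    qed simp
  next
    case False
    then obtain lam where "poly A lam = 0" using alg_closed_imp_poly_has_root by blast
    then have "[:-lam,1:] dvd A" by (simp add: poly_eq_0_iff_dvd)
    then obtain Q where A: "A = [:-lam,1:] * Q" by (elim dvdE)
    have Q: "Q \<noteq> 0" using less.prems(1) A by (cases "Q = 0") simp_all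
    have "poly A 0 = - lam * poly Q 0" using A by simp
    then have lam: "lam \<noteq> 0" and Q0: "poly Q 0 \<noteq> 0" using less.prems by auto
    have "degree A = degree [:-lam,1:] + degree Q" unfolding A by (rule degree_mult_eq) (simp_all add: Q)
    then have "degree Q < degree A" by simp
    from less.hyps[OF this Q Q0] obtain m where m: "m > 0"
      and mQ: "\<forall>f. opP Q f = (\<lambda>_. 0) \<longrightarrow> periodic_with m f" by blast
    obtain k where k: "k > 0" "lam ^ k = 1" using root_unity[OF lam] by blast
    obtain c :: nat where c: "c > 0" "of_nat c = (0 :: 'k alg_closure)" using char_ac by blast
    show ?thesis
    proof (intro exI[of _ "int c * (int k * m)"] conjI allI impI)
      show "int c * (int k * m) > 0" using m k c by simp
      fix f :: "int \<Rightarrow> 'k alg_closure" assume "opP A f = (\<lambda>_. 0)"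
      then have "opP Q (\<lambda>n. f (n+1) - lam * f n) = (\<lambda>_. 0)" unfolding A opP_lin .
      then have "periodic_with m (\<lambda>n. f (n+1) - lam * f n)" using mQ by blast
      then show "periodic_with (int c * (int k * m)) f"
        using step[of "\<lambda>n. f (n+1) - lam * f n" f lam m k c] m k c by simp
    qed
  qed
qed

lemma sum_fun_apply: "(\<Sum>i\<in>A. g i) x = (\<Sum>i\<in>A. g i x)"
  by (induction A rule: infinite_finite_induct) auto

lemma periodic_int_mult:
  assumes "periodic_with m f" shows "f (x + z * m) = f x"
proof -
  have nat_case: "f (y + int j * m) = f y" for y j
  proof (induction j)
    case 0 then show ?case by simp
  next
    case (Suc j)
    have "f (y + int (Suc j) * m) = f ((y + int j * m) + m)" by (simp add: algebra_simps)
    also have "\<dots> = f (y + int j * m)" using assms unfolding periodic_with_def by blast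
    finally show ?case using Suc by simp
  qed
  show ?thesis
  proof (cases "z \<ge> 0")
    case True
    then show ?thesis using nat_case[of x "nat z"] by simp
  next
    case False
    have "f ((x + z * m) + int (nat (-z)) * m) = f (x + z * m)" by (rule nat_case)
    then show ?thesis using False by (simp add: algebra_simps)
  qed
qed

lemma module_fscale: "Modules.module (fscale :: 'a::comm_ring_1 \<Rightarrow> (int \<Rightarrow> 'a) \<Rightarrow> _)"
  by unfold_locales (auto simp: fscale_def fun_eq_iff algebra_simps)

theorem lemma5p6:
  fixes p r :: nat
    and a :: "int \<Rightarrow> ('k::{field,finite}) alg_closure"
  assumes "prime p" and "r > 0" and "card (UNIV :: 'k set) = p ^ r"
    and "fin_supp a" and "a \<noteq> (\<lambda>_. 0)"
  shows "\<exists>m::int. m > 0 \<and>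
           (\<forall>f. conv f a = (\<lambda>_. 0) \<longrightarrow> periodic_with m f) \<and>
           {f. Delta a f = (\<lambda>_. 0)} \<subseteq> {f. periodic_with m f} \<and>
           (\<exists>B. finite B \<and> {f. Delta a f = (\<lambda>_. 0)} \<subseteq> module.span fscale B)"
proof -
  define S where "S = {k. a k \<noteq> 0}"
  have finS: "finite S" using assms(4) unfolding S_def fin_supp_def .
  have neS: "S \<noteq> {}" using assms(5) unfolding S_def by auto
  define t where "t = Max S"
  define s where "s = Min S"
  define d where "d = nat (t - s)"
  have tS: "t \<in> S" unfolding t_def using finS neS by simp
  have Sb: "s \<le> k \<and> k \<le> t" if "k \<in> S" for k
    unfolding s_def t_def using finS that by simp
  define A where "A = (\<Sum>j\<le>d. monom (a (t - int j)) j)"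
  have coeffA: "coeff A i = (if i \<le> d then a (t - int i) else 0)" for i
    unfolding A_def by (simp add: coeff_sum coeff_monom)
  have degA: "degree A \<le> d" by (rule degree_le) (simp add: coeffA)
  have A0: "coeff A 0 = a t" by (simp add: coeffA)
  then have A0': "poly A 0 \<noteq> 0" using tS unfolding S_def by (simp add: poly_0_coeff_0)
  then have Anz: "A \<noteq> 0" by auto
  have convA: "conv f a (n + t) = opP A f n" for f n
  proof -
    have "opP A f n = (\<Sum>j\<le>d. a (t - int j) * f (n + int j))"
      by (subst opP_ext[OF degA]) (simp add: coeffA)
    also have "\<dots> = (\<Sum>k\<in>(\<lambda>j. n + int j) ` {..d}. f k * a (n + t - k))"
      by (subst sum.reindex) (auto simp: inj_on_def algebra_simps)
    also have "\<dots> = (\<Sum>k\<in>{k. a (n + t - k) \<noteq> 0}. f k * a (n + t - k))"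
    proof (rule sum.mono_neutral_right)
      show "{k. a (n + t - k) \<noteq> 0} \<subseteq> (\<lambda>j. n + int j) ` {..d}"
      proof
        fix k assume "k \<in> {k. a (n + t - k) \<noteq> 0}"
        then have "n + t - k \<in> S" unfolding S_def by simp
        from Sb[OF this] have "0 \<le> k - n" "k - n \<le> t - s" by auto
        then have "k = n + int (nat (k - n))" "nat (k - n) \<le> d" unfolding d_def by auto
        then show "k \<in> (\<lambda>j. n + int j) ` {..d}" by blast
      qed
    qed auto
    finally show ?thesis unfolding conv_def by simp
  qed
  obtain m where m: "m > 0" and mA: "\<forall>f. opP A f = (\<lambda>_. 0) \<longrightarrow> periodic_with m f"
    using main_op[OF Anz A0'] by blast
  have ker: "periodic_with m f" if "conv f a = (\<lambda>_. 0)" for f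
  proof -
    have "opP A f = (\<lambda>_. 0)"
    proof
      fix n show "opP A f n = 0" using convA[of f n] that by simp
    qed
    then show ?thesis using mA by blast
  qed
  define e where "e j = (\<lambda>n. if n mod m = j then 1 else (0 :: 'k alg_closure))" for j
  define B where "B = e ` {0..<m}"
  interpret M: Modules.module "fscale :: 'k alg_closure \<Rightarrow> (int \<Rightarrow> 'k alg_closure) \<Rightarrow> _"
    by (rule module_fscale)
  have span: "f \<in> M.span B" if "periodic_with m f" for f
  proof -
    have "f = (\<Sum>j\<in>{0..<m}. fscale (f j) (e j))"
    proof
      fix n
      have "(\<Sum>j\<in>{0..<m}. fscale (f j) (e j)) n = (\<Sum>j\<in>{0..<m}. if j = n mod m then f j else 0)"
        unfolding sum_fun_apply fscale_def e_def by (intro sum.cong) auto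
      also have "\<dots> = f (n mod m)" using m by simp
      also have "f (n mod m) = f (n mod m + (n div m) * m)"
        by (rule periodic_int_mult[OF that, symmetric])
      also have "n mod m + (n div m) * m = n" by simp
      finally show "f n = (\<Sum>j\<in>{0..<m}. fscale (f j) (e j)) n" by simp
    qed
    also have "\<dots> \<in> M.span B"
      by (intro M.span_sum M.span_scale M.span_base) (auto simp: B_def)
    finally show ?thesis .
  qed
  show ?thesis
  proof (intro exI[of _ m] conjI allI impI)
    show "m > 0" by (rule m)
    show "periodic_with m f" if "conv f a = (\<lambda>_. 0)" for f using ker that .
    show "{f. Delta a f = (\<lambda>_. 0)} \<subseteq> {f. periodic_with m f}"
      using ker unfolding Delta_def by blast
    show "\<exists>B. finite B \<and> {f. Delta a f = (\<lambda>_. 0)} \<subseteq> module.span fscale B"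
      using ker span unfolding Delta_def B_def by blast
  qed
qed

end
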